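(* Let $\{(\mathbf{x}^k,\mathbf{y}^k,\boldsymbol{\gamma}^k)\}$ be generated by the two-block linearized ADMM below, applied under the standing assumptions (i)–(iv) below, with parameters satisfying $$L_x\ge L_g+\beta L_{\mathbf{A}}+6L_w^2+1,\quad L_y\ge L_w+L_w^2+3,\quad C_m=\tfrac{L_y+L_w^2}{2},\quad \beta\ge\max\left\{\frac{L_w+L_y+2}{\lambda_{\mathbf{B}^{\rm T}\mathbf{B}}},\frac{3(L_w^2+L_y^2)}{\lambda_{\mathbf{B}^{\rm T}\mathbf{B}}C_m},\frac{3L_y^2}{\lambda_{\mathbf{B}^{\rm T}\mathbf{B}}}\right\},$$ where $L_{\mathbf{A}}$ is the largest eigenvalue of $\mathbf{A}^{\rm T}\mathbf{A}$, $\lambda_{\mathbf{B}^{\rm T}\mathbf{B}}$ the smallest eigenvalue of $\mathbf{B}^{\rm T}\mathbf{B}$, and $L_w=L_g+L_h$. Define, for $k\ge1$, $$m_k=L_\beta(\mathbf{x}^k,\mathbf{y}^k,\boldsymbol{\gamma}^k)+C_m\|\mathbf{y}^k-\mathbf{y}^{k-1}\|^2.$$ Then the sequence $\{m_k\}$ is convergent.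
   Context: Problem: minimize $g(\mathbf{x},\mathbf{y})+f(\mathbf{x})+h(\mathbf{y})$ s.t. $\mathbf{A}\mathbf{x}+\mathbf{B}\mathbf{y}=\mathbf{0}$, $\mathbf{x}\in\mathbb{R}^p$, $\mathbf{y}\in\mathbb{R}^q$, $\mathbf{A}\in\mathbb{R}^{n\times p}$, $\mathbf{B}\in\mathbb{R}^{n\times q}$; $f$ possibly nonconvex nonsmooth. Standing assumptions: (i) $\nabla h$ is $L_h$-Lipschitz; (ii) $\nabla g$ is $L_g$-Lipschitz; (iii) $g+f+h$ is lower bounded on the feasible set $\{(\mathbf{x},\mathbf{y}):\mathbf{A}\mathbf{x}+\mathbf{B}\mathbf{y}=\mathbf{0}\}$ and coercive w.r.t. $\mathbf{y}$ over it (objective $\to+\infty$ along any feasible sequence with $\|\mathbf{y}^k\|\to\infty$); (iv) $\mathbf{B}$ has full column rank and $\mathrm{Im}(\mathbf{A})\subset\mathrm{Im}(\mathbf{B})$. $L_\beta(\mathbf{x},\mathbf{y},\boldsymbol{\gamma})=g(\mathbf{x},\mathbf{y})+f(\mathbf{x})+h(\mathbf{y})+\langle\boldsymbol{\gamma},\mathbf{A}\mathbf{x}+\mathbf{B}\mathbf{y}\rangle+\frac{\beta}{2}\|\mathbf{A}\mathbf{x}+\mathbf{B}\mathbf{y}\|^2$. Algorithm (parameters $L_x,L_y,\beta>0$, arbitrary initialization): $\mathbf{x}^{k+1}\in\arg\min\bar f^k$, $\mathbf{y}^{k+1}=\arg\min\bar h^k$, $\boldsymbol{\gamma}^{k+1}=\boldsymbol{\gamma}^k+\beta(\mathbf{A}\mathbf{x}^{k+1}+\mathbf{B}\mathbf{y}^{k+1})$,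 where $\bar f^k(\mathbf{x})=f(\mathbf{x})+\langle\boldsymbol{\gamma}^k,\mathbf{A}\mathbf{x}\rangle+\frac{L_x}{2}\|\mathbf{x}-\mathbf{x}^k\|^2+\langle\mathbf{x}-\mathbf{x}^k,\nabla_{\mathbf{x}}g(\mathbf{x}^k,\mathbf{y}^k)+\beta\mathbf{A}^{\rm T}(\mathbf{A}\mathbf{x}^k+\mathbf{B}\mathbf{y}^k)\rangle$, $\bar h^k(\mathbf{y})=\langle\boldsymbol{\gamma}^k,\mathbf{B}\mathbf{y}\rangle+\frac{L_y}{2}\|\mathbf{y}-\mathbf{y}^k\|^2+\frac{\beta}{2}\|\mathbf{A}\mathbf{x}^{k+1}+\mathbf{B}\mathbf{y}\|^2+\langle\mathbf{y}-\mathbf{y}^k,\nabla_{\mathbf{y}}g(\mathbf{x}^{k+1},\mathbf{y}^k)+\nabla h(\mathbf{y}^k)\rangle$ (minimizers of $\bar f^k$ assumed to exist). *)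

theory Defs
  imports "HOL-Analysis.Analysis"
begin

definition is_eigenvalue :: "real^'n^'n \<Rightarrow> real \<Rightarrow> bool" where
  "is_eigenvalue M l \<longleftrightarrow> (\<exists>v. v \<noteq> 0 \<and> M *v v = l *\<^sub>R v)"

definition aug_lagr ::
  "(real^'p \<Rightarrow> real^'q \<Rightarrow> real) \<Rightarrow> (real^'p \<Rightarrow> real) \<Rightarrow> (real^'q \<Rightarrow> real)
   \<Rightarrow> real^'p^'n \<Rightarrow> real^'q^'n \<Rightarrow> real \<Rightarrow> real^'p \<Rightarrow> real^'q \<Rightarrow> real^'n \<Rightarrow> real" where
  "aug_lagr g f h A B \<beta> x y \<gamma> =
     g x y + f x + h y + \<gamma> \<bullet> (A *v x + B *v y) + \<beta> / 2 * (norm (A *v x + B *v y))\<^sup>2"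

text \<open>Surrogate for the x-update (\<open>\<bar>f\<^sup>k\<close>), with \<open>gx\<close> the partial gradient of g in x.\<close>
definition fbar ::
  "(real^'p \<Rightarrow> real) \<Rightarrow> (real^'p \<Rightarrow> real^'q \<Rightarrow> real^'p) \<Rightarrow> real^'p^'n \<Rightarrow> real^'q^'n
   \<Rightarrow> real \<Rightarrow> real \<Rightarrow> real^'p \<Rightarrow> real^'q \<Rightarrow> real^'n \<Rightarrow> real^'p \<Rightarrow> real" where
  "fbar f gx A B \<beta> Lx xk yk \<gamma>k x =
     f x + \<gamma>k \<bullet> (A *v x) + Lx / 2 * (norm (x - xk))\<^sup>2
     + (x - xk) \<bullet> (gx xk yk + \<beta> *\<^sub>R (transpose A *v (A *v xk + B *v yk)))"

text \<open>Surrogate for the y-update (\<open>\<bar>h\<^sup>k\<close>); \<open>xk1\<close> is \<open>x\<^sup>k\<^sup>+\<^sup>1\<close>, \<open>gy\<close> the partial gradient of g in y,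
  \<open>gh\<close> the gradient of h.\<close>
definition hbar ::
  "(real^'p \<Rightarrow> real^'q \<Rightarrow> real^'q) \<Rightarrow> (real^'q \<Rightarrow> real^'q) \<Rightarrow> real^'p^'n \<Rightarrow> real^'q^'n
   \<Rightarrow> real \<Rightarrow> real \<Rightarrow> real^'p \<Rightarrow> real^'q \<Rightarrow> real^'n \<Rightarrow> real^'q \<Rightarrow> real" where
  "hbar gy gh A B \<beta> Ly xk1 yk \<gamma>k y =
     \<gamma>k \<bullet> (B *v y) + Ly / 2 * (norm (y - yk))\<^sup>2 + \<beta> / 2 * (norm (A *v xk1 + B *v y))\<^sup>2
     + (y - yk) \<bullet> (gy xk1 yk + gh yk)"

end

theory Submission
  imports Defs
begin



lemma adj: fixes A :: "real^'p^'n" shows "x \<bullet> (A *v y) = (transpose A *v x) \<bullet> y"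
  by (simp add: dot_lmul_matrix)

lemma sq_add: fixes a b :: "'a::real_inner"
  shows "(norm (a + b))\<^sup>2 = (norm a)\<^sup>2 + 2 * (a \<bullet> b) + (norm b)\<^sup>2"
  unfolding power2_norm_eq_inner by (simp add: inner_add_left inner_add_right inner_commute[of b a])

lemma hbar_expand:
  "hbar gy gh A B \<beta> Ly x1 y0 \<gamma> (y1 + d) = hbar gy gh A B \<beta> Ly x1 y0 \<gamma> y1
    + (transpose B *v \<gamma> + Ly *\<^sub>R (y1 - y0) + \<beta> *\<^sub>R (transpose B *v (A *v x1 + B *v y1)) + (gy x1 y0 + gh y0)) \<bullet> d
    + Ly/2 * (norm d)\<^sup>2 + \<beta>/2 * (norm (B *v d))\<^sup>2"
proof -
  have e1: "\<gamma> \<bullet> (B *v (y1 + d)) = \<gamma> \<bullet> (B *v y1) + (transpose B *v \<gamma>) \<bullet> d"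
    by (simp add: matrix_vector_right_distrib inner_add_right adj)
  have e2: "(norm (y1 + d - y0))\<^sup>2 = (norm (y1 - y0))\<^sup>2 + 2 * ((y1 - y0) \<bullet> d) + (norm d)\<^sup>2"
    using sq_add[of "y1 - y0" d] by (simp add: algebra_simps)
  have e3: "(norm (A *v x1 + B *v (y1 + d)))\<^sup>2 = (norm (A *v x1 + B *v y1))\<^sup>2
       + 2 * ((transpose B *v (A *v x1 + B *v y1)) \<bullet> d) + (norm (B *v d))\<^sup>2"
    using sq_add[of "A *v x1 + B *v y1" "B *v d"]
    by (simp add: matrix_vector_right_distrib adj add.assoc)
  have e4: "(y1 + d - y0) \<bullet> (gy x1 y0 + gh y0) = (y1 - y0) \<bullet> (gy x1 y0 + gh y0) + (gy x1 y0 + gh y0) \<bullet> d"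
    by (simp add: algebra_simps inner_add_left inner_diff_left inner_commute[of d])
  show ?thesis
    unfolding hbar_def e1 e2 e3 e4
    by (simp add: inner_add_left algebra_simps)
qed

lemma fbar_descent:
  fixes A :: "real^'p^'n"
  assumes step: "fbar f gx A B \<beta> Lx x0 y0 \<gamma> x1 \<le> fbar f gx A B \<beta> Lx x0 y0 \<gamma> x0"
    and gup: "g x1 y0 \<le> g x0 y0 + gx x0 y0 \<bullet> (x1 - x0) + Lg/2 * (norm (x1 - x0))\<^sup>2"
    and An: "(norm (A *v (x1 - x0)))\<^sup>2 \<le> LA * (norm (x1 - x0))\<^sup>2"
    and b: "\<beta> > 0"
  shows "aug_lagr g f h A B \<beta> x1 y0 \<gamma> \<le> aug_lagr g f h A B \<beta> x0 y0 \<gamma> - (Lx - Lg - \<beta> * LA)/2 * (norm (x1 - x0))\<^sup>2"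
proof -
  let ?r = "A *v x0 + B *v y0"
  have e3: "(norm (A *v x1 + B *v y0))\<^sup>2 = (norm ?r)\<^sup>2
       + 2 * ((transpose A *v ?r) \<bullet> (x1 - x0)) + (norm (A *v (x1 - x0)))\<^sup>2"
  proof -
    have eq: "A *v x1 + B *v y0 = ?r + A *v (x1 - x0)" by (simp add: matrix_vector_mult_diff_distrib)
    show ?thesis unfolding eq sq_add[of ?r "A *v (x1 - x0)"] adj[of ?r A] ..
  qed
  have e2: "\<gamma> \<bullet> (A *v x1 + B *v y0) = \<gamma> \<bullet> (A *v x1) + \<gamma> \<bullet> (B *v y0)"
    "\<gamma> \<bullet> (A *v x0 + B *v y0) = \<gamma> \<bullet> (A *v x0) + \<gamma> \<bullet> (B *v y0)" by (simp_all add: inner_add_right)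
  have s: "f x1 + \<gamma> \<bullet> (A *v x1) + Lx/2 * (norm (x1 - x0))\<^sup>2 + gx x0 y0 \<bullet> (x1 - x0)
       + \<beta> * ((transpose A *v ?r) \<bullet> (x1 - x0)) \<le> f x0 + \<gamma> \<bullet> (A *v x0)"
    using step unfolding fbar_def by (simp add: inner_add_right inner_commute[of "x1 - x0"])
  have m: "\<beta>/2 * (norm (A *v (x1 - x0)))\<^sup>2 \<le> \<beta>/2 * (LA * (norm (x1 - x0))\<^sup>2)"
    using An b by simp
  have d1: "\<beta>/2 * ((norm ?r)\<^sup>2 + 2 * ((transpose A *v ?r) \<bullet> (x1 - x0)) + (norm (A *v (x1 - x0)))\<^sup>2)
     = \<beta>/2 * (norm ?r)\<^sup>2 + \<beta> * ((transpose A *v ?r) \<bullet> (x1 - x0)) + \<beta>/2 * (norm (A *v (x1 - x0)))\<^sup>2"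
    by (simp add: algebra_simps)
  have d2: "(Lx - Lg - \<beta> * LA)/2 * (norm (x1 - x0))\<^sup>2 = Lx/2 * (norm (x1 - x0))\<^sup>2 - Lg/2 * (norm (x1 - x0))\<^sup>2 - \<beta>/2 * (LA * (norm (x1 - x0))\<^sup>2)"
    by (simp add: field_simps)
  show ?thesis
    unfolding aug_lagr_def e2 e3 d1 d2 using s gup m by linarith
qed

lemma small_nonpos: fixes a c :: real assumes "c \<ge> 0" "\<And>s. s > 0 \<Longrightarrow> a \<le> s * c" shows "a \<le> 0"
proof (rule ccontr)
  assume "\<not> a \<le> 0"
  then have a: "a > 0" by simp
  have "a \<le> (a/(c+1)) * c" using assms(2)[of "a/(c+1)"] a assms(1) by simp
  also have "\<dots> < a" using a assms(1) by (simp add: field_simps)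
  finally show False by simp
qed

lemma ystep_lemma:
  fixes B :: "real^'q^'n"
  assumes step: "\<And>y. hbar gy gh A B \<beta> Ly x1 y0 \<gamma> y1 \<le> hbar gy gh A B \<beta> Ly x1 y0 \<gamma> y"
    and b: "\<beta> > 0" and ly: "Ly > 0"
  shows "transpose B *v \<gamma> + Ly *\<^sub>R (y1 - y0) + \<beta> *\<^sub>R (transpose B *v (A *v x1 + B *v y1)) + (gy x1 y0 + gh y0) = 0"
    and "hbar gy gh A B \<beta> Ly x1 y0 \<gamma> y1 + Ly/2 * (norm (y0 - y1))\<^sup>2 \<le> hbar gy gh A B \<beta> Ly x1 y0 \<gamma> y0"
proof -
  define G where "G = transpose B *v \<gamma> + Ly *\<^sub>R (y1 - y0) + \<beta> *\<^sub>R (transpose B *v (A *v x1 + B *v y1)) + (gy x1 y0 + gh y0)"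
  define K where "K = Ly/2 * (norm G)\<^sup>2 + \<beta>/2 * (norm (B *v G))\<^sup>2"
  have K0: "K \<ge> 0" using b ly by (simp add: K_def)
  have "(norm G)\<^sup>2 \<le> 0"
  proof (rule small_nonpos[OF K0])
    fix s :: real assume s: "s > 0"
    have "hbar gy gh A B \<beta> Ly x1 y0 \<gamma> y1 \<le> hbar gy gh A B \<beta> Ly x1 y0 \<gamma> (y1 + (-s) *\<^sub>R G)" by (rule step)
    also have "\<dots> = hbar gy gh A B \<beta> Ly x1 y0 \<gamma> y1 - s * (norm G)\<^sup>2 + s\<^sup>2 * K"
    proof -
      have n1: "(norm ((-s) *\<^sub>R G))\<^sup>2 = s\<^sup>2 * (norm G)\<^sup>2" by (simp add: power_mult_distrib)
      have n2: "(norm (B *v ((-s) *\<^sub>R G)))\<^sup>2 = s\<^sup>2 * (norm (B *v G))\<^sup>2"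
        by (simp only: matrix_vector_mult_scaleR norm_scaleR power_mult_distrib) simp
      have n3: "G \<bullet> ((-s) *\<^sub>R G) = - s * (norm G)\<^sup>2" by (simp add: power2_norm_eq_inner)
      show ?thesis unfolding hbar_expand G_def[symmetric] n1 n2 n3 K_def by (simp add: algebra_simps)
    qed
    finally have "s * (norm G)\<^sup>2 \<le> s * (s * K)" by (simp add: power2_eq_square)
    then show "(norm G)\<^sup>2 \<le> s * K" using s by simp
  qed
  then have G0: "G = 0" by simp
  then show "transpose B *v \<gamma> + Ly *\<^sub>R (y1 - y0) + \<beta> *\<^sub>R (transpose B *v (A *v x1 + B *v y1)) + (gy x1 y0 + gh y0) = 0"
    by (simp add: G_def)
  have "hbar gy gh A B \<beta> Ly x1 y0 \<gamma> y0 = hbar gy gh A B \<beta> Ly x1 y0 \<gamma> (y1 + (y0 - y1))" by simp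
  also have "\<dots> = hbar gy gh A B \<beta> Ly x1 y0 \<gamma> y1 + Ly/2 * (norm (y0 - y1))\<^sup>2 + \<beta>/2 * (norm (B *v (y0 - y1)))\<^sup>2"
    unfolding hbar_expand G_def[symmetric] G0 by simp
  finally show "hbar gy gh A B \<beta> Ly x1 y0 \<gamma> y1 + Ly/2 * (norm (y0 - y1))\<^sup>2 \<le> hbar gy gh A B \<beta> Ly x1 y0 \<gamma> y0"
    using b by simp
qed

lemma ydesc:
  fixes B :: "real^'q^'n"
  assumes hs: "hbar gy gh A B \<beta> Ly x1 y0 \<gamma> y1 + Ly/2 * (norm (y0 - y1))\<^sup>2 \<le> hbar gy gh A B \<beta> Ly x1 y0 \<gamma> y0"
    and Fup: "g x1 y1 + h y1 \<le> g x1 y0 + h y0 + (gy x1 y0 + gh y0) \<bullet> (y1 - y0) + Lw/2 * (norm (y1 - y0))\<^sup>2"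
  shows "aug_lagr g f h A B \<beta> x1 y1 \<gamma> \<le> aug_lagr g f h A B \<beta> x1 y0 \<gamma> - (2 * Ly - Lw)/2 * (norm (y1 - y0))\<^sup>2"
proof -
  have n: "norm (y0 - y1) = norm (y1 - y0)" by (rule norm_minus_commute)
  have d: "(2 * Ly - Lw)/2 * (norm (y1 - y0))\<^sup>2 = Ly * (norm (y1 - y0))\<^sup>2 - Lw/2 * (norm (y1 - y0))\<^sup>2"
    by (simp add: field_simps)
  have c: "(y1 - y0) \<bullet> (gy x1 y0 + gh y0) = (gy x1 y0 + gh y0) \<bullet> (y1 - y0)" by (rule inner_commute)
  show ?thesis using hs Fup unfolding aug_lagr_def hbar_def n d c
    by (simp add: inner_add_right)
qed

lemma dual_lemma:
  "aug_lagr g f h A B \<beta> x y (\<gamma> + \<beta> *\<^sub>R (A *v x + B *v y))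
     = aug_lagr g f h A B \<beta> x y \<gamma> + \<beta> * (norm (A *v x + B *v y))\<^sup>2"
  unfolding aug_lagr_def by (simp add: inner_add_left power2_norm_eq_inner)

lemma rayleigh_min:
  fixes M :: "real^'n^'n"
  assumes sym: "transpose M = M"
  shows "\<exists>\<mu>. is_eigenvalue M \<mu> \<and> (\<forall>x. \<mu> * (norm x)\<^sup>2 \<le> x \<bullet> (M *v x))"
proof -
  let ?q = "\<lambda>x::real^'n. x \<bullet> (M *v x)"
  have cont: "continuous_on (sphere 0 1) ?q"
    by (intro continuous_intros linear_continuous_on matrix_vector_mul_bounded_linear)
  have ne: "sphere (0::real^'n) 1 \<noteq> {}"
    by (simp add: sphere_def) (metis norm_sgn vector_choose_size zero_le_one)
  obtain u where u: "u \<in> sphere 0 1" and umin: "\<And>y. y \<in> sphere 0 1 \<Longrightarrow> ?q u \<le> ?q y"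
    using continuous_attains_inf[OF compact_sphere ne cont] by blast
  define \<mu> where "\<mu> = ?q u"
  have nu: "norm u = 1" using u by simp
  have bnd: "\<mu> * (norm x)\<^sup>2 \<le> ?q x" for x
  proof (cases "x = 0")
    case True then show ?thesis by simp
  next
    case False
    let ?y = "(1 / norm x) *\<^sub>R x"
    have "?y \<in> sphere 0 1" using False by simp
    then have "\<mu> \<le> ?q ?y" using umin \<mu>_def by blast
    also have "?q ?y = ?q x / (norm x)\<^sup>2"
      by (simp add: matrix_vector_mult_scaleR power2_eq_square)
    finally show ?thesis using False by (simp add: field_simps)
  qed
  define e where "e x = ?q x - \<mu> * (norm x)\<^sup>2" for x
  have e0: "e x \<ge> 0" for x using bnd[of x] by (simp add: e_def)
  have eu: "e u = 0" using nu by (simp add: e_def \<mu>_def)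
  define b where "b v = (M *v u - \<mu> *\<^sub>R u) \<bullet> v" for v
  have exp: "e (u + t *\<^sub>R v) = e u + 2 * t * b v + t\<^sup>2 * e v" for t v
  proof -
    have s: "u \<bullet> (M *v v) = (M *v u) \<bullet> v" using adj[of u M v] sym by simp
    have n: "(norm (u + t *\<^sub>R v))\<^sup>2 = (norm u)\<^sup>2 + 2 * t * (u \<bullet> v) + t\<^sup>2 * (norm v)\<^sup>2"
      unfolding power2_norm_eq_inner by (simp add: inner_add_left inner_add_right inner_commute[of v u] power2_eq_square algebra_simps)
    show ?thesis
      unfolding e_def b_def n
      by (simp add: algebra_simps inner_add_left inner_add_right power2_norm_eq_inner
            power2_eq_square s inner_commute[of v "M *v u"])
  qed
  have b0: "b v = 0" for v
  proof -
    have h: "0 \<le> 2 * t * b v + t\<^sup>2 * e v" for t using e0[of "u + t *\<^sub>R v"] exp[of t v] eu by simp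
    have "-b v \<le> 0"
    proof (rule small_nonpos[of "e v / 2"])
      show "e v / 2 \<ge> 0" using e0 by simp
      fix s :: real assume "s > 0"
      have hh: "0 \<le> 2 * s * b v + s * s * e v" using h[of s] by (simp add: power2_eq_square)
      have "s * (- b v) \<le> s * (s * (e v / 2))" using hh by (simp add: algebra_simps)
      then show "- b v \<le> s * (e v / 2)" using \<open>s > 0\<close> by (rule mult_left_le_imp_le)
    qed
    moreover have "b v \<le> 0"
    proof (rule small_nonpos[of "e v / 2"])
      show "e v / 2 \<ge> 0" using e0 by simp
      fix s :: real assume "s > 0"
      have hh: "0 \<le> - 2 * s * b v + s * s * e v" using h[of "-s"] by (simp add: power2_eq_square)
      have "s * b v \<le> s * (s * (e v / 2))" using hh by (simp add: algebra_simps)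
      then show "b v \<le> s * (e v / 2)" using \<open>s > 0\<close> by (rule mult_left_le_imp_le)
    qed
    ultimately show ?thesis by simp
  qed
  have "M *v u - \<mu> *\<^sub>R u = 0" using b0[of "M *v u - \<mu> *\<^sub>R u"] by (simp add: b_def)
  then have "M *v u = \<mu> *\<^sub>R u" by simp
  moreover have "u \<noteq> 0" using nu by auto
  ultimately have "is_eigenvalue M \<mu>" unfolding is_eigenvalue_def by blast
  with bnd show ?thesis by blast
qed



lemma descent:
  fixes F :: "'a::real_inner \<Rightarrow> real" and G :: "'a \<Rightarrow> 'a"
  assumes der: "\<And>z. (F has_derivative (\<lambda>d. G z \<bullet> d)) (at z)"
    and lip: "\<And>z w. norm (G z - G w) \<le> L * norm (z - w)"
  shows "F y \<le> F x + G x \<bullet> (y - x) + L/2 * (norm (y - x))\<^sup>2"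
    and "F x + G x \<bullet> (y - x) - L/2 * (norm (y - x))\<^sup>2 \<le> F y"
proof -
  define d where "d = y - x"
  have dphi: "((\<lambda>t. F (x + t *\<^sub>R d)) has_real_derivative (G (x + t *\<^sub>R d) \<bullet> d)) (at t)" for t
  proof -
    have l: "((\<lambda>t. x + t *\<^sub>R d) has_derivative (\<lambda>s. s *\<^sub>R d)) (at t)"
      by (auto intro!: derivative_eq_intros)
    have "((F \<circ> (\<lambda>t. x + t *\<^sub>R d)) has_derivative ((\<lambda>e. G (x + t *\<^sub>R d) \<bullet> e) \<circ> (\<lambda>s. s *\<^sub>R d))) (at t)"
      by (rule diff_chain_at[OF l der])
    moreover have "((\<lambda>e. G (x + t *\<^sub>R d) \<bullet> e) \<circ> (\<lambda>s. s *\<^sub>R d)) = (\<lambda>s. (G (x + t *\<^sub>R d) \<bullet> d) * s)"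
      by (auto simp: fun_eq_iff)
    ultimately show ?thesis by (simp add: has_field_derivative_def o_def)
  qed
  have key: "\<bar>(G (x + t *\<^sub>R d) - G x) \<bullet> d\<bar> \<le> L * t * (norm d)\<^sup>2" if "0 \<le> t" for t
  proof -
    have "\<bar>(G (x + t *\<^sub>R d) - G x) \<bullet> d\<bar> \<le> norm (G (x + t *\<^sub>R d) - G x) * norm d"
      by (rule Cauchy_Schwarz_ineq2)
    also have "\<dots> \<le> (L * norm (t *\<^sub>R d)) * norm d"
      using lip[of "x + t *\<^sub>R d" x] by (intro mult_right_mono) auto
    also have "\<dots> = L * t * (norm d)\<^sup>2" using that by (simp add: power2_eq_square)
    finally show ?thesis .
  qed
  have "(\<lambda>t. t * (G x \<bullet> d) + L/2 * t\<^sup>2 * (norm d)\<^sup>2 - F (x + t *\<^sub>R d)) 0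
      \<le> (\<lambda>t. t * (G x \<bullet> d) + L/2 * t\<^sup>2 * (norm d)\<^sup>2 - F (x + t *\<^sub>R d)) 1"
  proof (rule DERIV_nonneg_imp_nondecreasing[of 0 1], simp)
    fix t :: real assume t: "0 \<le> t" "t \<le> 1"
    show "\<exists>y. ((\<lambda>t. t * (G x \<bullet> d) + L/2 * t\<^sup>2 * (norm d)\<^sup>2 - F (x + t *\<^sub>R d)) has_real_derivative y) (at t) \<and> 0 \<le> y"
      apply (rule exI[of _ "G x \<bullet> d + L * t * (norm d)\<^sup>2 - G (x + t *\<^sub>R d) \<bullet> d"])
      apply (rule conjI)
       apply (rule derivative_eq_intros dphi refl | simp)+
      using key[OF t(1)] by (simp add: inner_diff_left)
  qed
  then show "F y \<le> F x + G x \<bullet> (y - x) + L/2 * (norm (y - x))\<^sup>2" by (simp add: d_def)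
  have "(\<lambda>t. F (x + t *\<^sub>R d) - t * (G x \<bullet> d) + L/2 * t\<^sup>2 * (norm d)\<^sup>2) 0
      \<le> (\<lambda>t. F (x + t *\<^sub>R d) - t * (G x \<bullet> d) + L/2 * t\<^sup>2 * (norm d)\<^sup>2) 1"
  proof (rule DERIV_nonneg_imp_nondecreasing[of 0 1], simp)
    fix t :: real assume t: "0 \<le> t" "t \<le> 1"
    show "\<exists>y. ((\<lambda>t. F (x + t *\<^sub>R d) - t * (G x \<bullet> d) + L/2 * t\<^sup>2 * (norm d)\<^sup>2) has_real_derivative y) (at t) \<and> 0 \<le> y"
      apply (rule exI[of _ "G (x + t *\<^sub>R d) \<bullet> d - G x \<bullet> d + L * t * (norm d)\<^sup>2"])
      apply (rule conjI)
       apply (rule derivative_eq_intros dphi refl | simp)+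
      using key[OF t(1)] by (simp add: inner_diff_left)
  qed
  then show "F x + G x \<bullet> (y - x) - L/2 * (norm (y - x))\<^sup>2 \<le> F y" by (simp add: d_def)
qed



lemma rayleigh_max:
  fixes M :: "real^'n^'n"
  assumes sym: "transpose M = M"
  shows "\<exists>\<mu>. is_eigenvalue M \<mu> \<and> (\<forall>x. x \<bullet> (M *v x) \<le> \<mu> * (norm x)\<^sup>2)"
proof -
  have nv: "(- M) *v x = - (M *v x)" for x by (simp add: matrix_vector_mult_def vec_eq_iff sum_negf)
  have "transpose (- M) = - M" using sym by (simp add: transpose_def vec_eq_iff)
  from rayleigh_min[OF this] obtain \<mu> where e: "is_eigenvalue (- M) \<mu>" and b: "\<forall>x. \<mu> * (norm x)\<^sup>2 \<le> x \<bullet> ((- M) *v x)" by blast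
  from e obtain v where "v \<noteq> 0" "(- M) *v v = \<mu> *\<^sub>R v" unfolding is_eigenvalue_def by blast
  then have "M *v v = (- \<mu>) *\<^sub>R v" by (simp add: nv) (metis minus_minus scaleR_minus_left)
  with \<open>v \<noteq> 0\<close> have "is_eigenvalue M (- \<mu>)" unfolding is_eigenvalue_def by blast
  moreover have "\<forall>x. x \<bullet> (M *v x) \<le> (- \<mu>) * (norm x)\<^sup>2" proof (intro allI)
    fix x show "x \<bullet> (M *v x) \<le> (- \<mu>) * (norm x)\<^sup>2" using spec[OF b, of x] by (simp add: nv)
  qed
  ultimately show ?thesis by blast
qed

lemma three_sq: fixes a b c :: "'a::real_normed_vector"
  shows "(norm (a + b + c))\<^sup>2 \<le> 3 * ((norm a)\<^sup>2 + (norm b)\<^sup>2 + (norm c)\<^sup>2)"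
proof -
  have "norm (a + b + c) \<le> norm a + norm b + norm c"
    by (metis add_right_mono norm_triangle_ineq order_trans)
  then have "(norm (a + b + c))\<^sup>2 \<le> (norm a + norm b + norm c)\<^sup>2" by (simp add: power_mono)
  moreover have "3 * ((norm a)\<^sup>2 + (norm b)\<^sup>2 + (norm c)\<^sup>2) - (norm a + norm b + norm c)\<^sup>2
     = (norm a - norm b)\<^sup>2 + (norm b - norm c)\<^sup>2 + (norm a - norm c)\<^sup>2"
    by (simp add: power2_eq_square algebra_simps)
  moreover have "0 \<le> (norm a - norm b)\<^sup>2 + (norm b - norm c)\<^sup>2 + (norm a - norm c)\<^sup>2" by simp
  ultimately show ?thesis by linarith
qed

lemma quad_nonneg: fixes p m q \<nu> \<delta> :: real
  assumes "p > 0" "m\<^sup>2 \<le> p * q"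
  shows "0 \<le> p * \<nu>\<^sup>2 - 2 * m * \<delta> * \<nu> + q * \<delta>\<^sup>2"
proof -
  have "p * (p * \<nu>\<^sup>2 - 2 * m * \<delta> * \<nu> + q * \<delta>\<^sup>2) = (p * \<nu> - m * \<delta>)\<^sup>2 + (p * q - m\<^sup>2) * \<delta>\<^sup>2"
    by (simp add: power2_eq_square algebra_simps)
  also have "\<dots> \<ge> 0" using assms by simp
  finally show ?thesis using assms(1) by (simp add: zero_le_mult_iff)
qed



theorem lemma8:
  fixes g :: "real^'p \<Rightarrow> real^'q \<Rightarrow> real"
    and f :: "real^'p \<Rightarrow> real"
    and h :: "real^'q \<Rightarrow> real"
    and gx :: "real^'p \<Rightarrow> real^'q \<Rightarrow> real^'p"
    and gy :: "real^'p \<Rightarrow> real^'q \<Rightarrow> real^'q"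
    and gh :: "real^'q \<Rightarrow> real^'q"
    and A :: "real^'p^'n" and B :: "real^'q^'n"
    and Lg Lh Lx Ly \<beta> LA lamB :: real
    and X :: "nat \<Rightarrow> real^'p" and Y :: "nat \<Rightarrow> real^'q" and \<Gamma> :: "nat \<Rightarrow> real^'n"
  assumes grad_h: "\<And>y. (h has_derivative (\<lambda>d. gh y \<bullet> d)) (at y)"
    and lip_h: "\<And>y y'. norm (gh y - gh y') \<le> Lh * norm (y - y')"
    and grad_g: "\<And>x y. ((\<lambda>z. g (fst z) (snd z)) has_derivative
                     (\<lambda>d. gx x y \<bullet> fst d + gy x y \<bullet> snd d)) (at (x, y))"
    and lip_g: "\<And>x y x' y'. norm ((gx x y, gy x y) - (gx x' y', gy x' y'))
                              \<le> Lg * norm ((x, y) - (x', y'))"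
    and lower_bdd: "\<exists>c. \<forall>x y. A *v x + B *v y = 0 \<longrightarrow> c \<le> g x y + f x + h y"
    and coercive: "\<And>XS YS. (\<forall>k. A *v XS k + B *v YS k = 0) \<Longrightarrow>
                     filterlim (\<lambda>k. norm (YS k)) at_top sequentially \<Longrightarrow>
                     filterlim (\<lambda>k. g (XS k) (YS k) + f (XS k) + h (YS k)) at_top sequentially"
    and B_full_rank: "inj ((*v) B)"
    and im_AB: "range ((*v) A) \<subseteq> range ((*v) B)"
    and pos: "Lx > 0" "Ly > 0" "\<beta> > 0"
    and LA_char: "is_eigenvalue (transpose A ** A) LA"
                "\<And>l. is_eigenvalue (transpose A ** A) l \<Longrightarrow> l \<le> LA"
    and lamB_char: "is_eigenvalue (transpose B ** B) lamB"
                "\<And>l. is_eigenvalue (transpose B ** B) l \<Longrightarrow> lamB \<le> l"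
    and x_step: "\<And>k x. fbar f gx A B \<beta> Lx (X k) (Y k) (\<Gamma> k) (X (Suc k))
                        \<le> fbar f gx A B \<beta> Lx (X k) (Y k) (\<Gamma> k) x"
    and y_step: "\<And>k y. hbar gy gh A B \<beta> Ly (X (Suc k)) (Y k) (\<Gamma> k) (Y (Suc k))
                        \<le> hbar gy gh A B \<beta> Ly (X (Suc k)) (Y k) (\<Gamma> k) y"
    and dual_step: "\<And>k. \<Gamma> (Suc k) = \<Gamma> k + \<beta> *\<^sub>R (A *v X (Suc k) + B *v Y (Suc k))"
    and Lx_bd: "Lx \<ge> Lg + \<beta> * LA + 6 * (Lg + Lh)\<^sup>2 + 1"
    and Ly_bd: "Ly \<ge> (Lg + Lh) + (Lg + Lh)\<^sup>2 + 3"
    and beta_bd: "\<beta> \<ge> Max {((Lg + Lh) + Ly + 2) / lamB,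
                        3 * ((Lg + Lh)\<^sup>2 + Ly\<^sup>2) / (lamB * ((Ly + (Lg + Lh)\<^sup>2) / 2)),
                        3 * Ly\<^sup>2 / lamB}"
  shows "convergent (\<lambda>k. aug_lagr g f h A B \<beta> (X (Suc k)) (Y (Suc k)) (\<Gamma> (Suc k))
                 + (Ly + (Lg + Lh)\<^sup>2) / 2 * (norm (Y (Suc k) - Y k))\<^sup>2)"
proof -
  let ?L = "aug_lagr g f h A B \<beta>"
  define Lw where "Lw = Lg + Lh"
  define Cm where "Cm = (Ly + Lw\<^sup>2) / 2"
  define \<kappa> where "\<kappa> = \<beta> * lamB"
  have v1: "(vec 1 :: real^'q) \<noteq> 0" by (simp add: vec_eq_iff)
  have Lh0: "Lh \<ge> 0"
  proof -
    have "0 \<le> norm (gh (vec 1) - gh 0)" by simp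
    also have "\<dots> \<le> Lh * norm (vec 1 - (0::real^'q))" by (rule lip_h)
    finally show ?thesis using v1 by (simp add: zero_le_mult_iff)
  qed
  have Lg0: "Lg \<ge> 0"
  proof -
    have "0 \<le> norm ((gx 0 (vec 1), gy 0 (vec 1)) - (gx 0 0, gy 0 (0::real^'q)))" by simp
    also have "\<dots> \<le> Lg * norm ((0::real^'p, vec 1) - (0, 0::real^'q))" by (rule lip_g)
    finally show ?thesis using v1 by (simp add: zero_le_mult_iff)
  qed
  have Lw0: "Lw \<ge> 0" using Lg0 Lh0 by (simp add: Lw_def)
  have nP: "(norm (a, b))\<^sup>2 = (norm a)\<^sup>2 + (norm b)\<^sup>2" for a :: "real^'p" and b :: "real^'q"
    by (simp add: norm_Pair)
  have derF: "((\<lambda>z. g (fst z) (snd z)) has_derivative (\<lambda>d. (gx (fst z) (snd z), gy (fst z) (snd z)) \<bullet> d)) (at z)" for z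
    using grad_g[of "fst z" "snd z"] by (simp add: inner_prod_def)
  have lipF: "norm ((gx (fst z) (snd z), gy (fst z) (snd z)) - (gx (fst w) (snd w), gy (fst w) (snd w))) \<le> Lg * norm (z - w)" for z w
    using lip_g[of "fst z" "snd z" "fst w" "snd w"] by simp
  have gup: "g x' y' \<le> g x y + gx x y \<bullet> (x' - x) + gy x y \<bullet> (y' - y) + Lg/2 * ((norm (x' - x))\<^sup>2 + (norm (y' - y))\<^sup>2)" for x y x' y'
    using descent(1)[OF derF lipF, of "(x', y')" "(x, y)"] by (simp add: nP)
  have hup: "h y' \<le> h y + gh y \<bullet> (y' - y) + Lh/2 * (norm (y' - y))\<^sup>2" for y y'
    using descent(1)[OF grad_h lip_h] .
  have clip: "(norm ((gy x y + gh y) - (gy x' y' + gh y')))\<^sup>2 \<le> Lw\<^sup>2 * ((norm (x - x'))\<^sup>2 + (norm (y - y'))\<^sup>2)" for x y x' y'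
  proof -
    define N where "N = norm (x - x', y - y')"
    have n1: "norm (gy x y - gy x' y') \<le> Lg * N"
    proof -
      have "norm (gy x y - gy x' y') \<le> norm ((gx x y, gy x y) - (gx x' y', gy x' y'))"
        using norm_snd_le[of "gy x y - gy x' y'" "gx x y - gx x' y'"] by simp
      also have "\<dots> \<le> Lg * norm ((x, y) - (x', y'))" by (rule lip_g)
      finally show ?thesis by (simp add: N_def)
    qed
    have n2: "norm (gh y - gh y') \<le> Lh * N"
    proof -
      have "norm (gh y - gh y') \<le> Lh * norm (y - y')" by (rule lip_h)
      also have "\<dots> \<le> Lh * N" unfolding N_def using Lh0 norm_snd_le by (intro mult_left_mono) auto
      finally show ?thesis .
    qed
    have "norm ((gy x y + gh y) - (gy x' y' + gh y')) \<le> norm (gy x y - gy x' y') + norm (gh y - gh y')"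
      by (metis add_diff_add norm_triangle_ineq)
    also have "\<dots> \<le> Lw * N" using n1 n2 by (simp add: Lw_def algebra_simps)
    finally have "(norm ((gy x y + gh y) - (gy x' y' + gh y')))\<^sup>2 \<le> (Lw * N)\<^sup>2" by (simp add: power_mono)
    also have "\<dots> = Lw\<^sup>2 * ((norm (x - x'))\<^sup>2 + (norm (y - y'))\<^sup>2)" by (simp add: N_def power_mult_distrib nP)
    finally show ?thesis .
  qed
  have qB: "(norm (B *v v))\<^sup>2 = v \<bullet> ((transpose B ** B) *v v)" for v
  proof -
    have "v \<bullet> ((transpose B ** B) *v v) = v \<bullet> (transpose B *v (B *v v))" by (simp only: matrix_vector_mul_assoc)
    also have "\<dots> = (B *v v) \<bullet> (B *v v)" by (simp only: adj[of v "transpose B"] transpose_transpose)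
    finally show ?thesis by (simp add: power2_norm_eq_inner)
  qed
  have qA: "(norm (A *v v))\<^sup>2 = v \<bullet> ((transpose A ** A) *v v)" for v
  proof -
    have "v \<bullet> ((transpose A ** A) *v v) = v \<bullet> (transpose A *v (A *v v))" by (simp only: matrix_vector_mul_assoc)
    also have "\<dots> = (A *v v) \<bullet> (A *v v)" by (simp only: adj[of v "transpose A"] transpose_transpose)
    finally show ?thesis by (simp add: power2_norm_eq_inner)
  qed
  have symB: "transpose (transpose B ** B) = transpose B ** B" by (simp add: matrix_transpose_mul)
  have symA: "transpose (transpose A ** A) = transpose A ** A" by (simp add: matrix_transpose_mul)
  obtain muB where muB: "is_eigenvalue (transpose B ** B) muB" "\<forall>x. muB * (norm x)\<^sup>2 \<le> x \<bullet> ((transpose B ** B) *v x)"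
    using rayleigh_min[OF symB] by blast
  have lam_le: "lamB \<le> muB" using lamB_char(2)[OF muB(1)] .
  have Bn: "lamB * (norm v)\<^sup>2 \<le> (norm (B *v v))\<^sup>2" for v
  proof -
    have "lamB * (norm v)\<^sup>2 \<le> muB * (norm v)\<^sup>2" using lam_le by (simp add: mult_right_mono)
    also have "\<dots> \<le> (norm (B *v v))\<^sup>2" using muB(2) qB by simp
    finally show ?thesis .
  qed
  have lam_pos: "lamB > 0"
  proof -
    obtain v where v: "v \<noteq> 0" "(transpose B ** B) *v v = lamB *\<^sub>R v" using lamB_char(1) unfolding is_eigenvalue_def by blast
    have "B *v v \<noteq> 0" using B_full_rank v(1) by (metis inj_eq matrix_vector_mult_0_right)
    then have "0 < (norm (B *v v))\<^sup>2" by simp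
    also have "\<dots> = lamB * (norm v)\<^sup>2" using qB[of v] v(2) by (simp add: power2_norm_eq_inner)
    finally show ?thesis using v(1) by (simp add: zero_less_mult_iff)
  qed
  have BTn: "lamB * (norm (B *v v))\<^sup>2 \<le> (norm (transpose B *v (B *v v)))\<^sup>2" for v
  proof -
    define Mv where "Mv = transpose B *v (B *v v)"
    define p where "p = Mv - lamB *\<^sub>R v"
    have Mvp: "Mv = p + lamB *\<^sub>R v" by (simp add: p_def)
    have bq: "(norm (B *v v))\<^sup>2 = v \<bullet> Mv" using qB[of v] by (simp add: Mv_def matrix_vector_mul_assoc)
    have e: "v \<bullet> p \<ge> 0" using Bn[of v] bq by (simp add: p_def inner_diff_right power2_norm_eq_inner)
    have "(norm Mv)\<^sup>2 = (norm p)\<^sup>2 + 2 * lamB * (v \<bullet> p) + lamB\<^sup>2 * (norm v)\<^sup>2"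
      unfolding Mvp sq_add by (simp add: inner_commute power_mult_distrib)
    moreover have "lamB * (norm (B *v v))\<^sup>2 = lamB * (v \<bullet> p) + lamB\<^sup>2 * (norm v)\<^sup>2"
      unfolding bq Mvp by (simp add: inner_add_right dot_square_norm power2_eq_square algebra_simps)
    moreover have "0 \<le> lamB * (v \<bullet> p)" using lam_pos e by simp
    ultimately show ?thesis by (simp add: Mv_def)
  qed
  obtain muA where muA: "is_eigenvalue (transpose A ** A) muA" "\<forall>x. x \<bullet> ((transpose A ** A) *v x) \<le> muA * (norm x)\<^sup>2"
    using rayleigh_max[OF symA] by blast
  have An: "(norm (A *v v))\<^sup>2 \<le> LA * (norm v)\<^sup>2" for v
  proof -
    have "(norm (A *v v))\<^sup>2 \<le> muA * (norm v)\<^sup>2" using muA(2) qA by simp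
    also have "\<dots> \<le> LA * (norm v)\<^sup>2" using LA_char(2)[OF muA(1)] by (simp add: mult_right_mono)
    finally show ?thesis .
  qed
  have Mx: "((Lg + Lh) + Ly + 2) / lamB \<le> \<beta>" "3 * ((Lg + Lh)\<^sup>2 + Ly\<^sup>2) / (lamB * ((Ly + (Lg + Lh)\<^sup>2) / 2)) \<le> \<beta>"
     "3 * Ly\<^sup>2 / lamB \<le> \<beta>"
    using beta_bd by auto
  have Cm_pos: "Cm > 0" using pos by (simp add: Cm_def add_pos_nonneg)
  have kpos: "\<kappa> > 0" using pos lam_pos by (simp add: \<kappa>_def)
  have k1: "Lw + Ly + 2 \<le> \<kappa>" using Mx(1) lam_pos by (simp add: \<kappa>_def Lw_def pos_divide_le_eq)
  have k2: "3 * (Lw\<^sup>2 + Ly\<^sup>2) \<le> \<kappa> * Cm" using Mx(2) lam_pos Cm_pos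
    by (simp add: \<kappa>_def Lw_def Cm_def pos_divide_le_eq mult.assoc)
  have k3: "3 * Ly\<^sup>2 \<le> \<kappa>" using Mx(3) lam_pos by (simp add: \<kappa>_def pos_divide_le_eq)
  have foc0: "transpose B *v \<Gamma> k + Ly *\<^sub>R (Y (Suc k) - Y k) + \<beta> *\<^sub>R (transpose B *v (A *v X (Suc k) + B *v Y (Suc k))) + (gy (X (Suc k)) (Y k) + gh (Y k)) = 0" for k
    using ystep_lemma(1)[OF y_step[of k] pos(3) pos(2)] .
  have yh: "hbar gy gh A B \<beta> Ly (X (Suc k)) (Y k) (\<Gamma> k) (Y (Suc k)) + Ly/2 * (norm (Y k - Y (Suc k)))\<^sup>2 \<le> hbar gy gh A B \<beta> Ly (X (Suc k)) (Y k) (\<Gamma> k) (Y k)" for k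
    using ystep_lemma(2)[OF y_step[of k] pos(3) pos(2)] .
  have foc: "transpose B *v \<Gamma> (Suc k) = - (Ly *\<^sub>R (Y (Suc k) - Y k) + (gy (X (Suc k)) (Y k) + gh (Y k)))" for k
  proof -
    have "transpose B *v \<Gamma> (Suc k) = transpose B *v \<Gamma> k + \<beta> *\<^sub>R (transpose B *v (A *v X (Suc k) + B *v Y (Suc k)))"
      by (simp only: dual_step matrix_vector_right_distrib matrix_vector_mult_scaleR)
    then show ?thesis using foc0[of k] by (simp add: eq_neg_iff_add_eq_0 algebra_simps)
  qed
  have ax: "?L (X (Suc k)) (Y k) (\<Gamma> k) \<le> ?L (X k) (Y k) (\<Gamma> k) - (Lx - Lg - \<beta> * LA)/2 * (norm (X (Suc k) - X k))\<^sup>2" for k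
    apply (rule fbar_descent[OF x_step _ An pos(3)])
    using gup[where x="X k" and y="Y k" and x'="X (Suc k)" and y'="Y k"] by simp
  have ay: "?L (X (Suc k)) (Y (Suc k)) (\<Gamma> k) \<le> ?L (X (Suc k)) (Y k) (\<Gamma> k) - (2 * Ly - Lw)/2 * (norm (Y (Suc k) - Y k))\<^sup>2" for k
  proof (rule ydesc[OF yh])
    have a: "g (X (Suc k)) (Y (Suc k)) \<le> g (X (Suc k)) (Y k) + gy (X (Suc k)) (Y k) \<bullet> (Y (Suc k) - Y k) + Lg/2 * (norm (Y (Suc k) - Y k))\<^sup>2"
      using gup[where x="X (Suc k)" and y="Y k" and x'="X (Suc k)" and y'="Y (Suc k)"] by simp
    have b: "h (Y (Suc k)) \<le> h (Y k) + gh (Y k) \<bullet> (Y (Suc k) - Y k) + Lh/2 * (norm (Y (Suc k) - Y k))\<^sup>2"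
      using hup .
    have c: "Lw/2 * (norm (Y (Suc k) - Y k))\<^sup>2 = Lg/2 * (norm (Y (Suc k) - Y k))\<^sup>2 + Lh/2 * (norm (Y (Suc k) - Y k))\<^sup>2"
      by (simp add: Lw_def field_simps)
    show "g (X (Suc k)) (Y (Suc k)) + h (Y (Suc k)) \<le> g (X (Suc k)) (Y k) + h (Y k) + (gy (X (Suc k)) (Y k) + gh (Y k)) \<bullet> (Y (Suc k) - Y k) + Lw/2 * (norm (Y (Suc k) - Y k))\<^sup>2"
      unfolding c inner_add_left using a b by linarith
  qed
  have ad: "?L (X (Suc k)) (Y (Suc k)) (\<Gamma> (Suc k)) = ?L (X (Suc k)) (Y (Suc k)) (\<Gamma> k) + \<beta> * (norm (A *v X (Suc k) + B *v Y (Suc k)))\<^sup>2" for k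
    by (simp only: dual_step dual_lemma)
  have mvneg: "M *v (- z) = - (M *v z)" for M :: "real^'q^'n" and z
    by (simp add: matrix_vector_mult_def vec_eq_iff sum_negf)
  have inB: "\<exists>z. A *v x = B *v z" for x
  proof -
    have "A *v x \<in> range ((*v) B)" using im_AB by blast
    then show ?thesis by auto
  qed
  define s where "s k = ?L (X (Suc k)) (Y (Suc k)) (\<Gamma> (Suc k)) + Cm * (norm (Y (Suc k) - Y k))\<^sup>2" for k
  have dec: "s (Suc k) \<le> s k" for k
  proof -
    define x2 where "x2 = X (Suc (Suc k))"
    define x1 where "x1 = X (Suc k)"
    define y2 where "y2 = Y (Suc (Suc k))"
    define y1 where "y1 = Y (Suc k)"
    define y0 where "y0 = Y k"
    define r where "r = A *v x2 + B *v y2"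
    define a2 where "a2 = (norm (y2 - y1))\<^sup>2"
    define a1 where "a1 = (norm (y1 - y0))\<^sup>2"
    define X2 where "X2 = (norm (x2 - x1))\<^sup>2"
    define W where "W = \<beta> * (norm r)\<^sup>2"
    obtain z where z: "A *v x2 = B *v z" using inB by blast
    define w where "w = \<Gamma> (Suc (Suc k)) - \<Gamma> (Suc k)"
    have wr: "w = \<beta> *\<^sub>R r" by (simp add: w_def dual_step r_def x2_def y2_def)
    have wB: "w = B *v (\<beta> *\<^sub>R (z + y2))" unfolding wr r_def z
      by (simp add: matrix_vector_right_distrib matrix_vector_mult_scaleR)
    have wn: "(norm w)\<^sup>2 = \<beta>\<^sup>2 * (norm r)\<^sup>2" by (simp add: wr power_mult_distrib)
    have lw: "lamB * (norm w)\<^sup>2 \<le> (norm (transpose B *v w))\<^sup>2" using BTn[of "\<beta> *\<^sub>R (z + y2)"] wB by simp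
    have BTw: "transpose B *v w = (- (Ly *\<^sub>R (y2 - y1))) + Ly *\<^sub>R (y1 - y0) + (- ((gy x2 y1 + gh y1) - (gy x1 y0 + gh y0)))"
    proof -
      have "transpose B *v w = transpose B *v \<Gamma> (Suc (Suc k)) - transpose B *v \<Gamma> (Suc k)"
        by (simp only: w_def matrix_vector_mult_diff_distrib)
      also have "\<dots> = - (Ly *\<^sub>R (y2 - y1) + (gy x2 y1 + gh y1)) - (- (Ly *\<^sub>R (y1 - y0) + (gy x1 y0 + gh y0)))"
        by (simp only: foc x2_def x1_def y2_def y1_def y0_def)
      also have "\<dots> = (- (Ly *\<^sub>R (y2 - y1))) + Ly *\<^sub>R (y1 - y0) + (- ((gy x2 y1 + gh y1) - (gy x1 y0 + gh y0)))"
        by (simp add: algebra_simps)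
      finally show ?thesis .
    qed
    have cl: "(norm ((gy x2 y1 + gh y1) - (gy x1 y0 + gh y0)))\<^sup>2 \<le> Lw\<^sup>2 * (X2 + a1)"
      using clip[where x=x2 and y=y1 and x'=x1 and y'=y0] by (simp add: X2_def a1_def)
    have t3: "(norm (transpose B *v w))\<^sup>2 \<le> 3 * (Ly\<^sup>2 * a2 + Ly\<^sup>2 * a1 + Lw\<^sup>2 * (X2 + a1))"
    proof -
      have "(norm (transpose B *v w))\<^sup>2 \<le> 3 * ((norm (- (Ly *\<^sub>R (y2 - y1))))\<^sup>2 + (norm (Ly *\<^sub>R (y1 - y0)))\<^sup>2
           + (norm (- ((gy x2 y1 + gh y1) - (gy x1 y0 + gh y0))))\<^sup>2)"
        unfolding BTw by (rule three_sq)
      also have "\<dots> = 3 * (Ly\<^sup>2 * a2 + Ly\<^sup>2 * a1 + (norm ((gy x2 y1 + gh y1) - (gy x1 y0 + gh y0)))\<^sup>2)"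
        by (simp only: norm_minus_cancel norm_scaleR power_mult_distrib power2_abs a2_def a1_def)
      also have "\<dots> \<le> 3 * (Ly\<^sup>2 * a2 + Ly\<^sup>2 * a1 + Lw\<^sup>2 * (X2 + a1))" using cl by simp
      finally show ?thesis .
    qed
    have kW: "\<kappa> * W \<le> 3 * (Ly\<^sup>2 * a2 + Ly\<^sup>2 * a1 + Lw\<^sup>2 * (X2 + a1))"
    proof -
      have "\<kappa> * W = lamB * (norm w)\<^sup>2" unfolding wn \<kappa>_def W_def by (simp add: power2_eq_square)
      then show ?thesis using lw t3 by linarith
    qed
    have nn: "a2 \<ge> 0" "a1 \<ge> 0" "X2 \<ge> 0" by (simp_all add: a2_def a1_def X2_def)
    have b1: "3 * Ly\<^sup>2 * a2 \<le> \<kappa> * a2" using k3 nn by (simp add: mult_right_mono)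
    have b2: "3 * (Lw\<^sup>2 + Ly\<^sup>2) * a1 \<le> (\<kappa> * Cm) * a1" using k2 nn by (simp add: mult_right_mono)
    have b3: "3 * Lw\<^sup>2 * X2 \<le> \<kappa> * (3 * Lw\<^sup>2 * X2)"
    proof -
      have "1 * (3 * Lw\<^sup>2 * X2) \<le> \<kappa> * (3 * Lw\<^sup>2 * X2)" using k1 pos Lw0 nn
        by (intro mult_right_mono) auto
      then show ?thesis by simp
    qed
    have "\<kappa> * W \<le> \<kappa> * (a2 + Cm * a1 + 3 * Lw\<^sup>2 * X2)"
      using kW b1 b2 b3 by (simp add: algebra_simps)
    then have Wb: "W \<le> a2 + Cm * a1 + 3 * Lw\<^sup>2 * X2" using kpos by simp
    have P1: "0 \<le> ((Lx - Lg - \<beta> * LA)/2 - 3 * Lw\<^sup>2) * X2"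
      using Lx_bd nn by (intro mult_nonneg_nonneg) (auto simp: Lw_def)
    have P2: "0 \<le> ((2 * Ly - Lw)/2 - 1 - Cm) * a2"
      using Ly_bd nn by (intro mult_nonneg_nonneg) (auto simp: Lw_def Cm_def field_simps)
    have E1: "((Lx - Lg - \<beta> * LA)/2 - 3 * Lw\<^sup>2) * X2 = (Lx - Lg - \<beta> * LA)/2 * X2 - 3 * Lw\<^sup>2 * X2"
      by (simp add: algebra_simps)
    have E2: "((2 * Ly - Lw)/2 - 1 - Cm) * a2 = (2 * Ly - Lw)/2 * a2 - a2 - Cm * a2"
      by (simp add: algebra_simps)
    have A1: "?L x2 y1 (\<Gamma> (Suc k)) \<le> ?L x1 y1 (\<Gamma> (Suc k)) - (Lx - Lg - \<beta> * LA)/2 * X2"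
      using ax[of "Suc k"] by (simp add: x2_def x1_def y1_def X2_def)
    have A2: "?L x2 y2 (\<Gamma> (Suc k)) \<le> ?L x2 y1 (\<Gamma> (Suc k)) - (2 * Ly - Lw)/2 * a2"
      using ay[of "Suc k"] by (simp add: x2_def y2_def y1_def a2_def)
    have A3: "?L x2 y2 (\<Gamma> (Suc (Suc k))) = ?L x2 y2 (\<Gamma> (Suc k)) + W"
      using ad[of "Suc k"] by (simp add: x2_def y2_def W_def r_def)
    have S1: "s (Suc k) = ?L x2 y2 (\<Gamma> (Suc (Suc k))) + Cm * a2" by (simp add: s_def x2_def y2_def y1_def a2_def)
    have S0: "s k = ?L x1 y1 (\<Gamma> (Suc k)) + Cm * a1" by (simp add: s_def x1_def y1_def y0_def a1_def)
    show ?thesis unfolding S1 S0 using A1 A2 A3 Wb P1 P2 E1 E2 by linarith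
  qed
  obtain c0 where c0: "\<forall>x y. A *v x + B *v y = 0 \<longrightarrow> c0 \<le> g x y + f x + h y" using lower_bdd by blast
  have low: "c0 \<le> s k" for k
  proof -
    define x where "x = X (Suc k)"
    define y where "y = Y (Suc k)"
    define y0 where "y0 = Y k"
    define \<gamma> where "\<gamma> = \<Gamma> (Suc k)"
    obtain z where z: "A *v x = B *v z" using inB by blast
    define u where "u = y + z"
    define \<nu> where "\<nu> = norm u"
    define \<delta> where "\<delta> = norm (y - y0)"
    define ct where "ct = gy x y + gh y"
    define c1 where "c1 = gy x y0 + gh y0"
    define v where "v = ct - c1 - Ly *\<^sub>R (y - y0)"
    have r: "A *v x + B *v y = B *v u" using z by (simp add: u_def matrix_vector_right_distrib add.commute)
    have feas: "c0 \<le> g x (-z) + f x + h (-z)" using c0 z by (simp add: mvneg)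
    have Fl: "g x (-z) + h (-z) \<le> g x y + h y - ct \<bullet> u + Lw/2 * \<nu>\<^sup>2"
    proof -
      have a: "g x (-z) \<le> g x y + gy x y \<bullet> (-z - y) + Lg/2 * (norm (-z - y))\<^sup>2"
        using gup[where x=x and y=y and x'=x and y'="-z"] by simp
      have b: "h (-z) \<le> h y + gh y \<bullet> (-z - y) + Lh/2 * (norm (-z - y))\<^sup>2" using hup .
      have e: "-z - y = - u" by (simp add: u_def)
      have a': "g x (-z) \<le> g x y - gy x y \<bullet> u + Lg/2 * (norm u)\<^sup>2" using a unfolding e by simp
      have b': "h (-z) \<le> h y - gh y \<bullet> u + Lh/2 * (norm u)\<^sup>2" using b unfolding e by simp
      have c: "Lw/2 * (norm u)\<^sup>2 = Lg/2 * (norm u)\<^sup>2 + Lh/2 * (norm u)\<^sup>2" by (simp add: Lw_def field_simps)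
      have i: "ct \<bullet> u = gy x y \<bullet> u + gh y \<bullet> u" by (simp add: ct_def inner_add_left)
      show ?thesis unfolding \<nu>_def using a' b' c i by linarith
    qed
    have foc': "transpose B *v \<gamma> = - (Ly *\<^sub>R (y - y0) + c1)"
      using foc[of k] by (simp only: \<gamma>_def y_def y0_def c1_def x_def)
    have gu: "\<gamma> \<bullet> (B *v u) = v \<bullet> u - ct \<bullet> u"
      unfolding adj[of \<gamma> B u] foc' v_def by (simp add: inner_diff_left inner_add_left)
    have cc: "norm (ct - c1) \<le> Lw * \<delta>"
    proof -
      have "(norm (ct - c1))\<^sup>2 \<le> Lw\<^sup>2 * \<delta>\<^sup>2"
        using clip[where x=x and y=y and x'=x and y'=y0] by (simp add: ct_def c1_def \<delta>_def)
      then have sq: "(norm (ct - c1))\<^sup>2 \<le> (Lw * \<delta>)\<^sup>2" by (simp add: power_mult_distrib)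
      have "0 \<le> Lw * \<delta>" using Lw0 by (simp add: \<delta>_def)
      then show ?thesis using sq power2_le_imp_le by blast
    qed
    have vn: "norm v \<le> (Lw + Ly) * \<delta>"
    proof -
      have "norm v \<le> norm (ct - c1) + norm (Ly *\<^sub>R (y - y0))" unfolding v_def by (rule norm_triangle_ineq4)
      also have "norm (Ly *\<^sub>R (y - y0)) = Ly * \<delta>" using pos by (simp add: \<delta>_def)
      finally show ?thesis using cc by (simp add: algebra_simps)
    qed
    have vu: "- ((Lw + Ly) * \<delta> * \<nu>) \<le> v \<bullet> u"
    proof -
      have "\<bar>v \<bullet> u\<bar> \<le> norm v * norm u" by (rule Cauchy_Schwarz_ineq2)
      also have "\<dots> \<le> (Lw + Ly) * \<delta> * \<nu>" unfolding \<nu>_def using vn by (intro mult_right_mono) auto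
      finally show ?thesis by linarith
    qed
    have Bu: "\<kappa>/2 * \<nu>\<^sup>2 \<le> \<beta>/2 * (norm (B *v u))\<^sup>2"
    proof -
      have "\<beta> * (lamB * \<nu>\<^sup>2) \<le> \<beta> * (norm (B *v u))\<^sup>2" using Bn[of u] pos by (simp add: \<nu>_def)
      then show ?thesis by (simp add: \<kappa>_def algebra_simps)
    qed
    have mpq: "(Lw + Ly)\<^sup>2 \<le> (Ly + 2) * (Ly + Lw\<^sup>2)"
    proof -
      have "(Ly + 2) * (Ly + Lw\<^sup>2) - (Lw + Ly)\<^sup>2 = Ly * ((Lw - 1)\<^sup>2 + 1) + Lw\<^sup>2"
        by (simp add: power2_eq_square algebra_simps)
      moreover have "0 \<le> Ly * ((Lw - 1)\<^sup>2 + 1) + Lw\<^sup>2" using pos by simp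
      ultimately show ?thesis by linarith
    qed
    have Q: "0 \<le> (Ly + 2) * \<nu>\<^sup>2 - 2 * (Lw + Ly) * \<delta> * \<nu> + (Ly + Lw\<^sup>2) * \<delta>\<^sup>2"
      using quad_nonneg[OF _ mpq] pos by simp
    have kk: "(Ly + 2)/2 * \<nu>\<^sup>2 \<le> (\<kappa> - Lw)/2 * \<nu>\<^sup>2" using k1 by (intro mult_right_mono) auto
    have E: "(\<kappa> - Lw)/2 * \<nu>\<^sup>2 = \<kappa>/2 * \<nu>\<^sup>2 - Lw/2 * \<nu>\<^sup>2" by (simp add: field_simps)
    have E2: "(Ly + 2)/2 * \<nu>\<^sup>2 - (Lw + Ly) * \<delta> * \<nu> + Cm * \<delta>\<^sup>2
        = ((Ly + 2) * \<nu>\<^sup>2 - 2 * (Lw + Ly) * \<delta> * \<nu> + (Ly + Lw\<^sup>2) * \<delta>\<^sup>2) / 2"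
      by (simp add: Cm_def field_simps)
    have S: "s k = g x y + f x + h y + \<gamma> \<bullet> (B *v u) + \<beta>/2 * (norm (B *v u))\<^sup>2 + Cm * \<delta>\<^sup>2"
      unfolding s_def aug_lagr_def r[unfolded x_def y_def] by (simp add: x_def y_def y0_def \<gamma>_def \<delta>_def u_def)
    have Q2: "0 \<le> (Ly + 2)/2 * \<nu>\<^sup>2 - (Lw + Ly) * \<delta> * \<nu> + Cm * \<delta>\<^sup>2" unfolding E2 using Q by simp
    have R: "Lw/2 * \<nu>\<^sup>2 \<le> v \<bullet> u + \<beta>/2 * (norm (B *v u))\<^sup>2 + Cm * \<delta>\<^sup>2"
      using vu Bu kk E Q2 by linarith
    show ?thesis unfolding S gu using feas Fl R by linarith
  qed
  have "decseq s" by (rule decseq_SucI) (rule dec)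
  then obtain Lim where "s \<longlonglongrightarrow> Lim" using decseq_convergent[of s c0] low by blast
  then have "convergent s" by (auto simp: convergent_def)
  moreover have "s = (\<lambda>k. aug_lagr g f h A B \<beta> (X (Suc k)) (Y (Suc k)) (\<Gamma> (Suc k))
                 + (Ly + (Lg + Lh)\<^sup>2) / 2 * (norm (Y (Suc k) - Y k))\<^sup>2)"
    by (simp add: fun_eq_iff s_def Cm_def Lw_def)
  ultimately show ?thesis by simp
qed

end
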